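(* Let $K$ be a subgroup of $\mathrm{Spin}_8\subset\mathrm{Spin}_{10,1}$ and let $N$ be a subgroup of the null-rotation group $\{\mathbb{1}+\sum_\mu c_\mu\Sigma_{+\mu}: c\in\mathbb{R}^9\}$ containing a non-identity element; let $G$ be the subgroup generated by $K$ and $N$. For a subgroup $H$ write $\Delta^H$ for the $H$-invariant spinors, and set $\Delta^K_\pm=\Delta^K\cap\ker\Gamma_\pm$. Then: (i) $\Delta^K=\Delta^K_+\oplus\Delta^K_-$, $\Gamma_\pm$ restricts to an isomorphism $\Delta^K_\mp\to\Delta^K_\pm$, and $\dim\Delta^K_+=\dim\Delta^K_-=\tfrac12\dim\Delta^K$; $\dim\Delta^K$ is even; (ii) $\Delta^G=\Delta^K_+$, so $\dim\Delta^G=\tfrac12\dim\Delta^K$; (iii) if $\pi$ is a unit simple $(5,1)$-vector whose plane contains $e_0$ and $e_9$, and $\Delta(\pm\pi)=\{\varepsilon:\pi\cdot\varepsilon=\pm\varepsilon\}$, then $\Gamma_+$ maps $\Delta^K_-\cap\Delta(\pi)$ isomorphically onto $\Delta^K_+\cap\Delta(-\pi)$ and $\Delta^K_-\cap\Delta(-\pi)$ isomorphically onto $\Delta^K_+\cap\Delta(\pi)$; in particular $\dim(\Delta(\pi)\cap\Delta^G)\le\tfrac12\dim\Delta^K$.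
   Context: Let $\mathbb{M}^{10,1}$ be $\mathbb{R}^{11}$ with orthonormal basis $e_0,e_1,\dots,e_9,e_\natural$ and Lorentzian metric $\eta$ with $\eta(e_0,e_0)=-1$ and $\eta(e_M,e_M)=+1$ for $M\neq 0$. The Clifford algebra $\mathrm{C}\ell_{1,10}$ is generated by $\Gamma_M$, $M\in\{0,1,\dots,9,\natural\}$, with $\Gamma_M\Gamma_N+\Gamma_N\Gamma_M=2\eta_{MN}\mathbb{1}$; simple multivectors of orthogonal vectors act by Clifford products. $\Delta$ denotes the $32$-dimensional real irreducible representation of $\mathrm{C}\ell_{1,10}$ on which $\Gamma_0\Gamma_1\cdots\Gamma_9\Gamma_\natural=-\mathbb{1}$. $\Sigma_{MN}=-\tfrac12\Gamma_M\Gamma_N$; $\mathrm{Spin}_8$ is the connected subgroup of $\mathrm{Spin}_{10,1}$ with Lie algebra spanned by $\Sigma_{ij}$, $1\le i<j\le 8$. $\Gamma_\pm=\Gamma_0\pm\Gamma_9$ and $\Sigma_{+\mu}=-\tfrac12\Gamma_+\Gamma_\mu$ for $\mu\in\{1,\dots,8,\natural\}$. *)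

theory Defs
  imports "HOL-Analysis.Analysis"
begin

text \<open>Spinor endomorphisms: real 32x32 matrices acting on Delta = real^32.
  Indices of M^{10,1}: 0,1,...,9 and 10 standing for the index natural.\<close>

type_synonym smat = "real^32^32"
type_synonym spinor = "real^32"

definition eta :: "nat \<Rightarrow> nat \<Rightarrow> real" where
  "eta M N = (if M = N then (if M = 0 then -1 else 1) else 0)"

definition mprod :: "(nat \<Rightarrow> smat) \<Rightarrow> nat list \<Rightarrow> smat" where
  "mprod f xs = foldr (\<lambda>M A. f M ** A) xs (mat 1)"

text \<open>Gamma is a real representation of Cl(1,10) on real^32 with
  Gamma_0 Gamma_1 ... Gamma_9 Gamma_natural = -1 (this is Delta).\<close>
definition clifford_rep :: "(nat \<Rightarrow> smat) \<Rightarrow> bool" where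
  "clifford_rep \<Gamma> \<longleftrightarrow>
     (\<forall>M\<le>10. \<forall>N\<le>10. \<Gamma> M ** \<Gamma> N + \<Gamma> N ** \<Gamma> M = (2 * eta M N) *\<^sub>R mat 1)
     \<and> mprod \<Gamma> [0..<11] = - mat 1"

definition Sigma :: "(nat \<Rightarrow> smat) \<Rightarrow> nat \<Rightarrow> nat \<Rightarrow> smat" where
  "Sigma \<Gamma> M N = (-1/2) *\<^sub>R (\<Gamma> M ** \<Gamma> N)"

definition Gplus :: "(nat \<Rightarrow> smat) \<Rightarrow> smat" where
  "Gplus \<Gamma> = \<Gamma> 0 + \<Gamma> 9"

definition Gminus :: "(nat \<Rightarrow> smat) \<Rightarrow> smat" where
  "Gminus \<Gamma> = \<Gamma> 0 - \<Gamma> 9"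

definition Sigma_plus :: "(nat \<Rightarrow> smat) \<Rightarrow> nat \<Rightarrow> smat" where
  "Sigma_plus \<Gamma> \<mu> = (-1/2) *\<^sub>R (Gplus \<Gamma> ** \<Gamma> \<mu>)"

definition transverse :: "nat set" where
  "transverse = {1..8} \<union> {10}"

fun mpow :: "smat \<Rightarrow> nat \<Rightarrow> smat" where
  "mpow X 0 = mat 1"
| "mpow X (Suc n) = X ** mpow X n"

definition mexp :: "smat \<Rightarrow> smat" where
  "mexp X = (\<Sum>n. (1 / fact n) *\<^sub>R mpow X n)"

definition matgroup :: "smat set \<Rightarrow> bool" where
  "matgroup H \<longleftrightarrow> mat 1 \<in> H \<and> (\<forall>x\<in>H. \<forall>y\<in>H. x ** y \<in> H)
     \<and> (\<forall>x\<in>H. invertible x \<and> matrix_inv x \<in> H)"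

definition gen_group :: "smat set \<Rightarrow> smat set" where
  "gen_group A = \<Inter>{H. matgroup H \<and> A \<subseteq> H}"

text \<open>Spin_8: the connected subgroup whose Lie algebra is spanned by
  Sigma_ij, 1 <= i < j <= 8, i.e. the group generated by exp of its Lie algebra.\<close>
definition spin8_lie :: "(nat \<Rightarrow> smat) \<Rightarrow> smat set" where
  "spin8_lie \<Gamma> = span {Sigma \<Gamma> i j | i j. 1 \<le> i \<and> i < j \<and> j \<le> 8}"

definition Spin8 :: "(nat \<Rightarrow> smat) \<Rightarrow> smat set" where
  "Spin8 \<Gamma> = gen_group (mexp ` spin8_lie \<Gamma>)"

definition null_rot :: "(nat \<Rightarrow> smat) \<Rightarrow> smat set" where
  "null_rot \<Gamma> = {mat 1 + (\<Sum>\<mu>\<in>transverse. c \<mu> *\<^sub>R Sigma_plus \<Gamma> \<mu>) | c. True}"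

definition invariants :: "smat set \<Rightarrow> spinor set" where
  "invariants H = {\<epsilon>. \<forall>h\<in>H. h *v \<epsilon> = \<epsilon>}"

definition mker :: "smat \<Rightarrow> spinor set" where
  "mker A = {\<epsilon>. A *v \<epsilon> = 0}"

definition direct_sum :: "spinor set \<Rightarrow> spinor set \<Rightarrow> spinor set \<Rightarrow> bool" where
  "direct_sum V A B \<longleftrightarrow> V = {a + b | a b. a \<in> A \<and> b \<in> B} \<and> A \<inter> B = {0}"

text \<open>Vectors of M^{10,1} as functions on indices 0..10 (10 = natural).\<close>
definition minner :: "(nat \<Rightarrow> real) \<Rightarrow> (nat \<Rightarrow> real) \<Rightarrow> real" where
  "minner v w = (\<Sum>M\<le>10. eta M M * v M * w M)"

definition Gvec :: "(nat \<Rightarrow> smat) \<Rightarrow> (nat \<Rightarrow> real) \<Rightarrow> smat" where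
  "Gvec \<Gamma> v = (\<Sum>M\<le>10. v M *\<^sub>R \<Gamma> M)"

definition basis_vec :: "nat \<Rightarrow> nat \<Rightarrow> real" where
  "basis_vec K = (\<lambda>M. if M = K then 1 else 0)"

text \<open>w 0,...,w 5 are pairwise orthogonal vectors spanning a (5,1)-plane
  (one timelike, five spacelike), the simple 6-vector w0 ^ ... ^ w5 is unit,
  and its plane contains e_0 and e_9.\<close>
definition unit_simple_51_e09 :: "(nat \<Rightarrow> nat \<Rightarrow> real) \<Rightarrow> bool" where
  "unit_simple_51_e09 w \<longleftrightarrow>
     (\<forall>i<6. \<forall>j<6. i \<noteq> j \<longrightarrow> minner (w i) (w j) = 0)
     \<and> card {i. i < 6 \<and> minner (w i) (w i) < 0} = 1
     \<and> card {i. i < 6 \<and> minner (w i) (w i) > 0} = 5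
     \<and> \<bar>\<Prod>i<6. minner (w i) (w i)\<bar> = 1
     \<and> (\<exists>a. \<forall>M\<le>10. basis_vec 0 M = (\<Sum>i<6. a i * w i M))
     \<and> (\<exists>a. \<forall>M\<le>10. basis_vec 9 M = (\<Sum>i<6. a i * w i M))"

definition multivec_action :: "(nat \<Rightarrow> smat) \<Rightarrow> (nat \<Rightarrow> nat \<Rightarrow> real) \<Rightarrow> smat" where
  "multivec_action \<Gamma> w = foldr (\<lambda>i A. Gvec \<Gamma> (w i) ** A) [0..<6] (mat 1)"

definition eig :: "smat \<Rightarrow> real \<Rightarrow> spinor set" where
  "eig P s = {\<epsilon>. P *v \<epsilon> = s *\<^sub>R \<epsilon>}"

end

theory Submission
  imports Defs
begin


lemma Cauchy_product_sums_bl: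
  fixes a :: "nat \<Rightarrow> 'a::banach" and b :: "nat \<Rightarrow> 'b::banach"
    and prod :: "'a \<Rightarrow> 'b \<Rightarrow> 'c::banach"
  assumes bl: "bounded_bilinear prod"
    and a: "summable (\<lambda>k. norm (a k))"
    and b: "summable (\<lambda>k. norm (b k))"
  shows "(\<lambda>k. \<Sum>i\<le>k. prod (a i) (b (k - i))) sums (prod (\<Sum>k. a k) (\<Sum>k. b k))"
proof -
  obtain K where K: "K > 0" "\<And>x y. norm (prod x y) \<le> norm x * norm y * K"
    using bounded_bilinear.pos_bounded[OF bl] by blast
  let ?S1 = "\<lambda>n::nat. {..<n} \<times> {..<n}"
  let ?S2 = "\<lambda>n::nat. {(i,j). i + j < n}"
  have S1_mono: "\<And>m n. m \<le> n \<Longrightarrow> ?S1 m \<subseteq> ?S1 n" by auto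
  have S2_le_S1: "\<And>n. ?S2 n \<subseteq> ?S1 n" by auto
  have S1_le_S2: "\<And>n. ?S1 (n div 2) \<subseteq> ?S2 n" by auto
  have finite_S1: "\<And>n. finite (?S1 n)" by simp
  with S2_le_S1 have finite_S2: "\<And>n. finite (?S2 n)" by (rule finite_subset)
  have aK: "summable (\<lambda>k. K * norm (a k))" using a by (rule summable_mult)
  let ?g = "\<lambda>(i,j). prod (a i) (b j)"
  let ?f = "\<lambda>(i,j). (K * norm (a i)) * norm (b j)"
  have f_nonneg: "\<And>x. 0 \<le> ?f x" using K by auto
  then have norm_sum_f: "\<And>A. norm (sum ?f A) = sum ?f A"
    unfolding real_norm_def
    by (simp only: abs_of_nonneg sum_nonneg [rule_format])
  have "(\<lambda>n. prod (\<Sum>k<n. a k) (\<Sum>k<n. b k)) \<longlonglongrightarrow> prod (\<Sum>k. a k) (\<Sum>k. b k)"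
    by (intro bounded_bilinear.tendsto[OF bl] summable_LIMSEQ summable_norm_cancel [OF a] summable_norm_cancel [OF b])
  moreover have "\<And>n. prod (\<Sum>k<n. a k) (\<Sum>k<n. b k) = sum ?g (?S1 n)"
    by (simp only: bounded_bilinear.sum_left[OF bl], simp add: bounded_bilinear.sum_right[OF bl] sum.cartesian_product)
  ultimately have 1: "(\<lambda>n. sum ?g (?S1 n)) \<longlonglongrightarrow> prod (\<Sum>k. a k) (\<Sum>k. b k)"
    by simp
  have "(\<lambda>n. (\<Sum>k<n. K * norm (a k)) * (\<Sum>k<n. norm (b k))) \<longlonglongrightarrow> (\<Sum>k. K * norm (a k)) * (\<Sum>k. norm (b k))"
    using aK b by (intro tendsto_mult summable_LIMSEQ)
  then have "(\<lambda>n. sum ?f (?S1 n)) \<longlonglongrightarrow> (\<Sum>k. K * norm (a k)) * (\<Sum>k. norm (b k))"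
    by (simp only: sum_product sum.Sigma [rule_format] finite_lessThan)
  then have "convergent (\<lambda>n. sum ?f (?S1 n))"
    by (rule convergentI)
  then have Cauchy: "Cauchy (\<lambda>n. sum ?f (?S1 n))"
    by (rule convergent_Cauchy)
  have "Zfun (\<lambda>n. sum ?f (?S1 n - ?S2 n)) sequentially"
  proof (rule ZfunI, simp only: eventually_sequentially norm_sum_f)
    fix r :: real
    assume r: "0 < r"
    from CauchyD [OF Cauchy r] obtain N
      where "\<forall>m\<ge>N. \<forall>n\<ge>N. norm (sum ?f (?S1 m) - sum ?f (?S1 n)) < r" ..
    then have "\<And>m n. N \<le> n \<Longrightarrow> n \<le> m \<Longrightarrow> norm (sum ?f (?S1 m - ?S1 n)) < r"
      by (simp only: sum_diff finite_S1 S1_mono)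
    then have N: "\<And>m n. N \<le> n \<Longrightarrow> n \<le> m \<Longrightarrow> sum ?f (?S1 m - ?S1 n) < r"
      by (simp only: norm_sum_f)
    show "\<exists>N. \<forall>n\<ge>N. sum ?f (?S1 n - ?S2 n) < r"
    proof (intro exI allI impI)
      fix n
      assume "2 * N \<le> n"
      then have n: "N \<le> n div 2" by simp
      have "sum ?f (?S1 n - ?S2 n) \<le> sum ?f (?S1 n - ?S1 (n div 2))"
        by (intro sum_mono2 finite_Diff finite_S1 f_nonneg Diff_mono subset_refl S1_le_S2)
      also have "\<dots> < r"
        using n div_le_dividend by (rule N)
      finally show "sum ?f (?S1 n - ?S2 n) < r" .
    qed
  qed
  then have "Zfun (\<lambda>n. sum ?g (?S1 n - ?S2 n)) sequentially"
    apply (rule Zfun_le [rule_format])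
    apply (simp only: norm_sum_f)
    apply (rule order_trans [OF norm_sum sum_mono])
    using K(2) by (auto simp: mult_ac)
  then have 2: "(\<lambda>n. sum ?g (?S1 n) - sum ?g (?S2 n)) \<longlonglongrightarrow> 0"
    unfolding tendsto_Zfun_iff diff_0_right
    by (simp only: sum_diff finite_S1 S2_le_S1)
  with 1 have "(\<lambda>n. sum ?g (?S2 n)) \<longlonglongrightarrow> prod (\<Sum>k. a k) (\<Sum>k. b k)"
    by (rule Lim_transform2)
  then show ?thesis
    by (simp only: sums_def sum.triangle_reindex)
qed

definition nu :: "smat \<Rightarrow> real" where
  "nu A = (\<Sum>i\<in>UNIV. \<Sum>j\<in>UNIV. \<bar>A$i$j\<bar>)"

lemma row_le_nu: "(\<Sum>j\<in>UNIV. \<bar>A$i$j\<bar>) \<le> nu A"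
  unfolding nu_def by (rule member_le_sum) (auto intro: sum_nonneg)

lemma entry_le_nu: "\<bar>A$i$j\<bar> \<le> nu A"
  by (rule order_trans[OF _ row_le_nu[of A i]]) (rule member_le_sum, auto)

lemma nu_nonneg: "0 \<le> nu A"
  unfolding nu_def by (auto intro: sum_nonneg)

lemma nu_mult: "nu (A ** B) \<le> nu A * nu B"
proof -
  have "nu (A ** B) = (\<Sum>i\<in>UNIV. \<Sum>j\<in>UNIV. \<bar>\<Sum>k\<in>UNIV. A$i$k * B$k$j\<bar>)"
    by (simp add: nu_def matrix_matrix_mult_def)
  also have "\<dots> \<le> (\<Sum>i\<in>UNIV. \<Sum>j\<in>UNIV. \<Sum>k\<in>UNIV. \<bar>A$i$k\<bar> * \<bar>B$k$j\<bar>)"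
    by (intro sum_mono) (metis (no_types, lifting) abs_mult sum.cong sum_abs)
  also have "\<dots> = (\<Sum>i\<in>UNIV. \<Sum>k\<in>UNIV. \<bar>A$i$k\<bar> * (\<Sum>j\<in>UNIV. \<bar>B$k$j\<bar>))"
    by (simp add: sum_distrib_left, subst sum.swap, simp)
  also have "\<dots> \<le> (\<Sum>i\<in>UNIV. \<Sum>k\<in>UNIV. \<bar>A$i$k\<bar> * nu B)"
    by (intro sum_mono mult_left_mono row_le_nu) auto
  also have "\<dots> = nu A * nu B"
    by (simp add: nu_def sum_distrib_right)
  finally show ?thesis .
qed

lemma nu_one: "nu (mat 1) = 32"
proof -
  have "nu (mat 1) = (\<Sum>i\<in>(UNIV::32 set). \<Sum>j\<in>UNIV. if i = j then 1 else 0)"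
    unfolding nu_def mat_def by (intro sum.cong) auto
  also have "\<dots> = 32" by simp
  finally show ?thesis .
qed

lemma nu_mpow: "nu (mpow X n) \<le> 32 * nu X ^ n"
proof (induction n)
  case 0 then show ?case by (simp add: nu_one)
next
  case (Suc n)
  have "nu (mpow X (Suc n)) \<le> nu X * nu (mpow X n)" using nu_mult by simp
  also have "\<dots> \<le> nu X * (32 * nu X ^ n)" by (intro mult_left_mono Suc nu_nonneg)
  finally show ?case by (simp add: mult_ac)
qed


lemma norm_le_nu: "norm A \<le> nu A"
proof -
  have "norm A \<le> (\<Sum>i\<in>UNIV. norm (A$i))"
    by (simp add: norm_vec_def L2_set_le_sum)
  also have "\<dots> \<le> nu A" unfolding nu_def
    by (intro sum_mono norm_le_l1_cart)
  finally show ?thesis .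
qed

lemma nu_le_norm: "nu A \<le> 1024 * norm A"
proof -
  have "nu A \<le> (\<Sum>i\<in>(UNIV::32 set). \<Sum>j\<in>(UNIV::32 set). norm A)"
    unfolding nu_def
    by (intro sum_mono order_trans[OF component_le_norm_cart Finite_Cartesian_Product.norm_nth_le])
  then show ?thesis by simp
qed

lemma matrix_add_rdistrib': "((B + C) ** A) = (B ** A) + (C ** A)"
  by (vector matrix_matrix_mult_def sum.distrib[symmetric] field_simps)

lemma mult_norm_bound: "norm (a ** b) \<le> norm a * norm b * (1024*1024)" for a b :: smat
proof -
  have "norm (a ** b) \<le> nu a * nu b" using norm_le_nu nu_mult order_trans by blast
  also have "\<dots> \<le> (1024 * norm a) * (1024 * norm b)"
    by (intro mult_mono nu_le_norm nu_nonneg) auto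
  finally show ?thesis by (simp add: mult_ac)
qed

lemma bl_mult: "bounded_bilinear ((**) :: smat \<Rightarrow> smat \<Rightarrow> smat)"
  apply (rule bounded_bilinear.intro)
  apply (rule matrix_add_rdistrib')
  apply (rule matrix_add_ldistrib)
  apply (simp add: scalar_matrix_assoc)
  apply (simp add: matrix_scalar_ac scalar_matrix_assoc)
  using mult_norm_bound by blast

lemma summable_mexp_norm: "summable (\<lambda>n. norm ((1 / fact n) *\<^sub>R mpow X n))"
proof (rule summable_norm_comparison_test)
  show "\<exists>N. \<forall>n\<ge>N. norm ((1 / fact n) *\<^sub>R mpow X n) \<le> 32 * (inverse (fact n) * nu X ^ n)"
  proof (intro exI allI impI)
    fix n :: nat
    have "norm ((1 / fact n) *\<^sub>R mpow X n) = (1 / fact n) * norm (mpow X n)" by simp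
    also have "\<dots> \<le> (1 / fact n) * (32 * nu X ^ n)"
      by (intro mult_left_mono order_trans[OF norm_le_nu nu_mpow]) auto
    finally show "norm ((1 / fact n) *\<^sub>R mpow X n) \<le> 32 * (inverse (fact n) * nu X ^ n)"
      by (simp add: field_simps)
  qed
  show "summable (\<lambda>n. 32 * (inverse (fact n) * nu X ^ n))"
    by (intro summable_mult summable_exp)
qed

lemma summable_mexp: "summable (\<lambda>n. (1 / fact n) *\<^sub>R mpow X n)"
  using summable_norm_cancel[OF summable_mexp_norm] .

lemma mpow_add: "mpow X (m + n) = mpow X m ** mpow X n"
  by (induction m) (auto simp: matrix_mul_assoc)

lemma mat_scaleR_right: "A ** (c *\<^sub>R B) = c *\<^sub>R (A ** B)" for A B :: smat
  by (simp add: matrix_scalar_ac scalar_matrix_assoc)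

lemma mat_scaleR_left: "(c *\<^sub>R A) ** B = c *\<^sub>R (A ** B)" for A B :: smat
  by (simp add: scalar_matrix_assoc)

lemma matrix_neg_left: "(- A) ** B = - (A ** B)" for A B :: smat
  by (simp add: matrix_matrix_mult_def vec_eq_iff sum_negf)

lemma mpow_neg: "mpow (- X) n = (-1)^n *\<^sub>R mpow X n"
proof (induction n)
  case 0 then show ?case by simp
next
  case (Suc n)
  have "mpow (- X) (Suc n) = - (X ** ((-1)^n *\<^sub>R mpow X n))"
    using Suc by (simp add: matrix_neg_left)
  also have "\<dots> = (-1)^(Suc n) *\<^sub>R mpow X (Suc n)"
    by (simp add: mat_scaleR_right mat_scaleR_left matrix_neg_left del: scaleR_minus1_left)
  finally show ?case .
qed

lemma mpow_comm: "A ** X = X ** A \<Longrightarrow> A ** mpow X n = mpow X n ** A"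
proof (induction n)
  case 0 then show ?case by simp
next
  case (Suc n)
  have "A ** mpow X (Suc n) = (A ** X) ** mpow X n" by (simp add: matrix_mul_assoc)
  also have "\<dots> = X ** (A ** mpow X n)" using Suc by (metis matrix_mul_assoc)
  also have "\<dots> = mpow X (Suc n) ** A" using Suc by (metis matrix_mul_assoc mpow.simps(2))
  finally show ?case .
qed

lemma mexp_comm:
  assumes "A ** X = X ** A"
  shows "A ** mexp X = mexp X ** A"
proof -
  have "A ** mexp X = (\<Sum>n. A ** ((1 / fact n) *\<^sub>R mpow X n))"
    unfolding mexp_def
    by (rule bounded_linear.suminf[OF bounded_bilinear.bounded_linear_right[OF bl_mult] summable_mexp])
  also have "\<dots> = (\<Sum>n. ((1 / fact n) *\<^sub>R mpow X n) ** A)"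
    using mpow_comm[OF assms] by (simp add: mat_scaleR_right mat_scaleR_left)
  also have "\<dots> = mexp X ** A"
    unfolding mexp_def
    by (rule bounded_linear.suminf[OF bounded_bilinear.bounded_linear_left[OF bl_mult] summable_mexp, symmetric])
  finally show ?thesis .
qed


lemma alt_binom: "(\<Sum>l\<le>n. (1 / fact l) * (1 / fact (n - l)) * (-1::real) ^ (n - l)) = (if n = 0 then 1 else 0)"
proof -
  have "(\<Sum>l\<le>n. (1 / fact l) * (1 / fact (n - l)) * (-1::real) ^ (n - l))
      = (\<Sum>l\<le>n. real (n choose l) * 1 ^ l * (-1::real) ^ (n - l)) / fact n"
    by (simp add: sum_divide_distrib binomial_fact field_simps)
  also have "\<dots> = (1 + (-1::real)) ^ n / fact n"
    by (simp only: binomial_ring)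
  finally show ?thesis by simp
qed

lemma mexp_inv: "mexp X ** mexp (- X) = mat 1"
proof -
  have s: "(\<lambda>k. \<Sum>i\<le>k. ((1 / fact i) *\<^sub>R mpow X i) ** ((1 / fact (k - i)) *\<^sub>R mpow (-X) (k - i)))
      sums (mexp X ** mexp (- X))"
    unfolding mexp_def by (rule Cauchy_product_sums_bl[OF bl_mult summable_mexp_norm summable_mexp_norm])
  have "\<And>k. (\<Sum>i\<le>k. ((1 / fact i) *\<^sub>R mpow X i) ** ((1 / fact (k - i)) *\<^sub>R mpow (-X) (k - i)))
     = (\<Sum>i\<le>k. ((1 / fact i) * (1 / fact (k - i)) * (-1::real) ^ (k - i)) *\<^sub>R mpow X k)"
    by (intro sum.cong refl)
       (simp add: mpow_neg mat_scaleR_right mat_scaleR_left mpow_add[symmetric])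
  also have "\<And>k. \<dots>k = (if k = 0 then mat 1 else 0)"
    by (simp only: scaleR_sum_left[symmetric] alt_binom) simp
  finally have "(\<lambda>k. if k = 0 then mat 1 else 0) sums (mexp X ** mexp (- X))"
    using s by simp
  moreover have "(\<lambda>k. if k = 0 then mat 1 else (0::smat)) sums mat 1"
    using sums_single[of 0 "\<lambda>_. mat 1 :: smat"] by simp
  ultimately show ?thesis using sums_unique2 by blast
qed

lemma mexp_invertible: "invertible (mexp X)"
  unfolding invertible_def using mexp_inv[of X] mexp_inv[of "-X"] by auto




lemma subspace_invariants: "subspace (invariants H)"
  unfolding subspace_def invariants_def
  by (auto simp: matrix_vector_right_distrib matrix_vector_mult_scaleR)

lemma subspace_mker: "subspace (mker A)"
  unfolding subspace_def mker_def
  by (auto simp: matrix_vector_right_distrib matrix_vector_mult_scaleR)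

lemma mv_assoc: "A *v (B *v x) = (A ** B) *v x"
  by (rule matrix_vector_mul_assoc)

lemma mv_scaleR_left: "(c *\<^sub>R A) *v x = c *\<^sub>R (A *v x)" for A :: smat
  by (simp add: matrix_vector_mult_def vec_eq_iff sum_distrib_left mult.assoc)

lemma part_i:
  fixes P Q :: smat and K :: "smat set"
  assumes PP: "P ** P = 0" and QQ: "Q ** Q = 0"
    and PQ: "P ** Q + Q ** P = (-4) *\<^sub>R mat 1"
    and comm: "\<And>h. h \<in> K \<Longrightarrow> h ** P = P ** h \<and> h ** Q = Q ** h"
  defines "Dp \<equiv> invariants K \<inter> mker P" and "Dm \<equiv> invariants K \<inter> mker Q"
  shows "direct_sum (invariants K) Dp Dm
     \<and> bij_betw (\<lambda>\<epsilon>. P *v \<epsilon>) Dm Dp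
     \<and> bij_betw (\<lambda>\<epsilon>. Q *v \<epsilon>) Dp Dm
     \<and> 2 * dim Dp = dim (invariants K) \<and> 2 * dim Dm = dim (invariants K)"
proof -
  have PPv: "P *v (P *v x) = 0" for x using PP by (simp add: mv_assoc)
  have QQv: "Q *v (Q *v x) = 0" for x using QQ by (simp add: mv_assoc)
  have PQv: "P *v (Q *v x) + Q *v (P *v x) = (-4) *\<^sub>R x" for x
  proof -
    have "P *v (Q *v x) + Q *v (P *v x) = (P ** Q + Q ** P) *v x"
      by (simp add: mv_assoc matrix_vector_mult_add_rdistrib)
    also have "\<dots> = ((-4) *\<^sub>R mat 1) *v x" using PQ by simp
    also have "\<dots> = (-4) *\<^sub>R x" by (simp only: mv_scaleR_left matrix_vector_mul_lid)
    finally show ?thesis .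
  qed
  have hP: "h *v (P *v x) = P *v (h *v x)" if "h \<in> K" for h x
    using comm[OF that] by (simp add: mv_assoc)
  have hQ: "h *v (Q *v x) = Q *v (h *v x)" if "h \<in> K" for h x
    using comm[OF that] by (simp add: mv_assoc)
  define c4 :: real where "c4 = -1/4"
  have decomp: "x = c4 *\<^sub>R (P *v (Q *v x)) + c4 *\<^sub>R (Q *v (P *v x))" for x
  proof -
    have "c4 *\<^sub>R (P *v (Q *v x)) + c4 *\<^sub>R (Q *v (P *v x))
        = c4 *\<^sub>R (P *v (Q *v x) + Q *v (P *v x))" by (simp add: scaleR_right_distrib)
    also have "\<dots> = x" by (simp add: PQv c4_def)
    finally show ?thesis by simp
  qed
  have invP: "P *v x \<in> invariants K" if "x \<in> invariants K" for x
    using that hP unfolding invariants_def by auto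
  have invQ: "Q *v x \<in> invariants K" if "x \<in> invariants K" for x
    using that hQ unfolding invariants_def by auto
  have invS: "c *\<^sub>R x \<in> invariants K" if "x \<in> invariants K" for x c
    using subspace_invariants that by (rule subspace_mul)
  have sDp: "subspace Dp" unfolding Dp_def by (intro subspace_inter subspace_invariants subspace_mker)
  have sDm: "subspace Dm" unfolding Dm_def by (intro subspace_inter subspace_invariants subspace_mker)
  have sum_eq: "invariants K = {a + b |a b. a \<in> Dp \<and> b \<in> Dm}"
  proof (intro equalityI subsetI)
    fix x assume x: "x \<in> invariants K"
    let ?a = "c4 *\<^sub>R (P *v (Q *v x))" and ?b = "c4 *\<^sub>R (Q *v (P *v x))"
    have "?a \<in> Dp" unfolding Dp_def mker_def
      using invS[OF invP[OF invQ[OF x]]] by (simp add: matrix_vector_mult_scaleR PPv)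
    moreover have "?b \<in> Dm" unfolding Dm_def mker_def
      using invS[OF invQ[OF invP[OF x]]] by (simp add: matrix_vector_mult_scaleR QQv)
    ultimately show "x \<in> {a + b |a b. a \<in> Dp \<and> b \<in> Dm}"
      using decomp[of x] by blast
  next
    fix x assume "x \<in> {a + b |a b. a \<in> Dp \<and> b \<in> Dm}"
    then show "x \<in> invariants K" unfolding Dp_def Dm_def
      using subspace_add[OF subspace_invariants] by blast
  qed
  have int0: "Dp \<inter> Dm = {0}"
  proof (intro equalityI subsetI)
    fix x assume "x \<in> Dp \<inter> Dm"
    then have "P *v x = 0" "Q *v x = 0" unfolding Dp_def Dm_def mker_def by auto
    then show "x \<in> {0}" using decomp[of x] by simp
  next
    fix x :: spinor assume "x \<in> {0}"
    then show "x \<in> Dp \<inter> Dm"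
      unfolding Dp_def Dm_def mker_def using subspace_0[OF subspace_invariants] by auto
  qed
  have bijP: "bij_betw (\<lambda>\<epsilon>. P *v \<epsilon>) Dm Dp"
  proof (rule bij_betw_imageI)
    show "inj_on (\<lambda>\<epsilon>. P *v \<epsilon>) Dm"
    proof (rule inj_onI)
      fix x y assume "x \<in> Dm" "y \<in> Dm" "P *v x = P *v y"
      then have "Q *v x = 0" "Q *v y = 0" unfolding Dm_def mker_def by auto
      then show "x = y" using decomp[of x] decomp[of y] \<open>P *v x = P *v y\<close> by simp
    qed
    show "(\<lambda>\<epsilon>. P *v \<epsilon>) ` Dm = Dp"
    proof (intro equalityI subsetI)
      fix y assume "y \<in> (\<lambda>\<epsilon>. P *v \<epsilon>) ` Dm"
      then obtain x where "x \<in> Dm" "y = P *v x" by auto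
      then show "y \<in> Dp" unfolding Dp_def Dm_def mker_def using invP PPv by auto
    next
      fix y assume y: "y \<in> Dp"
      then have "P *v y = 0" "y \<in> invariants K" unfolding Dp_def mker_def by auto
      let ?x = "c4 *\<^sub>R (Q *v y)"
      have "?x \<in> Dm" unfolding Dm_def mker_def
        using invS[OF invQ[OF \<open>y \<in> invariants K\<close>]] by (simp add: matrix_vector_mult_scaleR QQv)
      moreover have "P *v ?x = y" using decomp[of y] \<open>P *v y = 0\<close>
        by (simp add: matrix_vector_mult_scaleR)
      ultimately show "y \<in> (\<lambda>\<epsilon>. P *v \<epsilon>) ` Dm" by (metis image_eqI)
    qed
  qed
  have bijQ: "bij_betw (\<lambda>\<epsilon>. Q *v \<epsilon>) Dp Dm"
  proof (rule bij_betw_imageI)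
    show "inj_on (\<lambda>\<epsilon>. Q *v \<epsilon>) Dp"
    proof (rule inj_onI)
      fix x y assume "x \<in> Dp" "y \<in> Dp" "Q *v x = Q *v y"
      then have "P *v x = 0" "P *v y = 0" unfolding Dp_def mker_def by auto
      then show "x = y" using decomp[of x] decomp[of y] \<open>Q *v x = Q *v y\<close> by simp
    qed
    show "(\<lambda>\<epsilon>. Q *v \<epsilon>) ` Dp = Dm"
    proof (intro equalityI subsetI)
      fix y assume "y \<in> (\<lambda>\<epsilon>. Q *v \<epsilon>) ` Dp"
      then obtain x where "x \<in> Dp" "y = Q *v x" by auto
      then show "y \<in> Dm" unfolding Dp_def Dm_def mker_def using invQ QQv by auto
    next
      fix y assume y: "y \<in> Dm"
      then have "Q *v y = 0" "y \<in> invariants K" unfolding Dm_def mker_def by auto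
      let ?x = "c4 *\<^sub>R (P *v y)"
      have "?x \<in> Dp" unfolding Dp_def mker_def
        using invS[OF invP[OF \<open>y \<in> invariants K\<close>]] by (simp add: matrix_vector_mult_scaleR PPv)
      moreover have "Q *v ?x = y" using decomp[of y] \<open>Q *v y = 0\<close>
        by (simp add: matrix_vector_mult_scaleR)
      ultimately show "y \<in> (\<lambda>\<epsilon>. Q *v \<epsilon>) ` Dp" by (metis image_eqI)
    qed
  qed
  have d1: "dim Dp \<le> dim Dm"
    using dim_image_le[of "\<lambda>\<epsilon>. P *v \<epsilon>" Dm] bijP by (simp add: bij_betw_def)
  have d2: "dim Dm \<le> dim Dp"
    using dim_image_le[of "\<lambda>\<epsilon>. Q *v \<epsilon>" Dp] bijQ by (simp add: bij_betw_def)
  have d3: "dim (invariants K) + 0 = dim Dp + dim Dm"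
    using dim_sums_Int[OF sDp sDm] sum_eq int0 by simp
  show ?thesis
    using sum_eq int0 bijP bijQ d1 d2 d3 unfolding direct_sum_def by simp
qed




lemma matrix_diff_ldistrib: "A ** (B - C) = A ** B - A ** C" for A B C :: smat
  by (vector matrix_matrix_mult_def sum_subtractf[symmetric] field_simps)

lemma matrix_diff_rdistrib: "(B - C) ** A = B ** A - C ** A" for A B C :: smat
  by (vector matrix_matrix_mult_def sum_subtractf[symmetric] field_simps)

lemma matrix_neg_right: "A ** (- B) = - (A ** B)" for A B :: smat
  by (simp add: matrix_matrix_mult_def vec_eq_iff sum_negf)

lemma sum_mult_left: "(\<Sum>i\<in>S. f i) ** A = (\<Sum>i\<in>S. f i ** A)" for A :: smat
  by (induction S rule: infinite_finite_induct) (auto simp: matrix_add_rdistrib')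

lemma sum_mult_right: "A ** (\<Sum>i\<in>S. f i) = (\<Sum>i\<in>S. A ** f i)" for A :: smat
  by (induction S rule: infinite_finite_induct) (auto simp: matrix_add_ldistrib)

lemma sum_mv: "(\<Sum>i\<in>S. f i) *v x = (\<Sum>i\<in>S. f i *v x)" for x :: spinor
  by (induction S rule: infinite_finite_induct) (auto simp: matrix_vector_mult_add_rdistrib)

lemma cl_rel:
  assumes "clifford_rep \<Gamma>" "M \<le> 10" "N \<le> 10"
  shows "\<Gamma> M ** \<Gamma> N + \<Gamma> N ** \<Gamma> M = (2 * eta M N) *\<^sub>R mat 1"
  using assms unfolding clifford_rep_def by blast

lemma cl_anti:
  assumes "clifford_rep \<Gamma>" "M \<le> 10" "N \<le> 10" "M \<noteq> N"
  shows "\<Gamma> M ** \<Gamma> N = - (\<Gamma> N ** \<Gamma> M)"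
proof -
  have "\<Gamma> M ** \<Gamma> N + \<Gamma> N ** \<Gamma> M = 0"
    using cl_rel[OF assms(1-3)] assms(4) by (simp add: eta_def)
  then show ?thesis by (simp add: eq_neg_iff_add_eq_0)
qed

lemma cl_sq0: "clifford_rep \<Gamma> \<Longrightarrow> \<Gamma> 0 ** \<Gamma> 0 = - mat 1"
proof -
  assume "clifford_rep \<Gamma>"
  then have "(2::real) *\<^sub>R (\<Gamma> 0 ** \<Gamma> 0) = (2::real) *\<^sub>R (- mat 1)"
    using cl_rel[of \<Gamma> 0 0] by (simp add: eta_def flip: scaleR_2)
  then show ?thesis by (simp only: scaleR_cancel_left) simp
qed

lemma cl_sq: "clifford_rep \<Gamma> \<Longrightarrow> M \<le> 10 \<Longrightarrow> M \<noteq> 0 \<Longrightarrow> \<Gamma> M ** \<Gamma> M = mat 1"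
proof -
  assume "clifford_rep \<Gamma>" "M \<le> 10" "M \<noteq> 0"
  then have "(2::real) *\<^sub>R (\<Gamma> M ** \<Gamma> M) = (2::real) *\<^sub>R (mat 1)"
    using cl_rel[of \<Gamma> M M] by (simp add: eta_def flip: scaleR_2)
  then show ?thesis by (simp only: scaleR_cancel_left) simp
qed

lemma gp_sq: "clifford_rep \<Gamma> \<Longrightarrow> Gplus \<Gamma> ** Gplus \<Gamma> = 0"
  using cl_sq0[of \<Gamma>] cl_sq[of \<Gamma> 9] cl_anti[of \<Gamma> 0 9]
  by (simp add: Gplus_def matrix_add_ldistrib matrix_add_rdistrib')

lemma gm_sq: "clifford_rep \<Gamma> \<Longrightarrow> Gminus \<Gamma> ** Gminus \<Gamma> = 0"
  using cl_sq0[of \<Gamma>] cl_sq[of \<Gamma> 9] cl_anti[of \<Gamma> 0 9]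
  by (simp add: Gminus_def matrix_diff_ldistrib matrix_diff_rdistrib)

lemma aux4: "2 *\<^sub>R (- x) - 2 *\<^sub>R x = (-4) *\<^sub>R (x::'a::real_vector)"
proof -
  have "2 *\<^sub>R (- x) - 2 *\<^sub>R x = (-2) *\<^sub>R x - 2 *\<^sub>R x" by simp
  also have "\<dots> = ((-2) - 2) *\<^sub>R x" by (rule scaleR_left_diff_distrib[symmetric])
  also have "((-2::real) - 2) = -4" by simp
  finally show ?thesis .
qed

lemma gpm: "clifford_rep \<Gamma> \<Longrightarrow> Gplus \<Gamma> ** Gminus \<Gamma> + Gminus \<Gamma> ** Gplus \<Gamma> = (-4) *\<^sub>R mat 1"
  using cl_sq0[of \<Gamma>] cl_sq[of \<Gamma> 9] cl_anti[of \<Gamma> 0 9]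
proof -
  assume "clifford_rep \<Gamma>"
  then have "Gplus \<Gamma> ** Gminus \<Gamma> + Gminus \<Gamma> ** Gplus \<Gamma> = 2 *\<^sub>R (- mat 1) - 2 *\<^sub>R mat 1"
  using cl_sq0[of \<Gamma>] cl_sq[of \<Gamma> 9] cl_anti[of \<Gamma> 0 9]
  by (simp add: Gplus_def Gminus_def matrix_diff_ldistrib matrix_diff_rdistrib
      matrix_add_ldistrib matrix_add_rdistrib' scaleR_2)
  also have "\<dots> = (-4) *\<^sub>R mat 1" by (rule aux4)
  finally show ?thesis .
qed




lemma transverse_facts: "\<mu> \<in> transverse \<Longrightarrow> \<mu> \<le> 10 \<and> \<mu> \<noteq> 0 \<and> \<mu> \<noteq> 9"
  unfolding transverse_def by auto

lemma gp_anti: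
  assumes rep: "clifford_rep \<Gamma>" and mu: "\<mu> \<in> transverse"
  shows "\<Gamma> \<mu> ** Gplus \<Gamma> = - (Gplus \<Gamma> ** \<Gamma> \<mu>)"
  using transverse_facts[OF mu] cl_anti[OF rep, of \<mu> 0] cl_anti[OF rep, of \<mu> 9]
  by (simp add: Gplus_def matrix_add_ldistrib matrix_add_rdistrib')

lemma comm_gen:
  assumes rep: "clifford_rep \<Gamma>" and a: "a \<le> 10" "i \<le> 10" "j \<le> 10" "a \<noteq> i" "a \<noteq> j"
  shows "\<Gamma> a ** (\<Gamma> i ** \<Gamma> j) = (\<Gamma> i ** \<Gamma> j) ** \<Gamma> a"
proof -
  have "\<Gamma> a ** (\<Gamma> i ** \<Gamma> j) = (\<Gamma> a ** \<Gamma> i) ** \<Gamma> j" by (simp add: matrix_mul_assoc)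
  also have "\<dots> = - (\<Gamma> i ** (\<Gamma> a ** \<Gamma> j))"
    using cl_anti[OF rep a(1,2,4)] by (simp add: matrix_neg_left matrix_mul_assoc)
  also have "\<dots> = (\<Gamma> i ** \<Gamma> j) ** \<Gamma> a"
    using cl_anti[OF rep a(1,3,5)] by (simp add: matrix_neg_right matrix_mul_assoc)
  finally show ?thesis .
qed

lemma lie_comm:
  assumes rep: "clifford_rep \<Gamma>" and X: "X \<in> spin8_lie \<Gamma>" and a: "a = 0 \<or> a = 9"
  shows "\<Gamma> a ** X = X ** \<Gamma> a"
  using X unfolding spin8_lie_def
proof (induction rule: span_induct_alt)
  case base
  then show ?case by simp
next
  case (step c x y)
  then obtain i j where ij: "1 \<le> i" "i < j" "j \<le> 8" "x = Sigma \<Gamma> i j" by blast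
  have "\<Gamma> a ** x = x ** \<Gamma> a"
    unfolding ij(4) Sigma_def mat_scaleR_right mat_scaleR_left
    using comm_gen[OF rep, of a i j] ij a by auto
  then show ?case using step(2)
    by (simp add: matrix_add_ldistrib matrix_add_rdistrib' mat_scaleR_right mat_scaleR_left)
qed

lemma inv_facts:
  assumes "invertible x"
  shows "x ** matrix_inv x = mat 1" "matrix_inv x ** x = mat 1"
  using someI_ex[OF assms[unfolded invertible_def]] unfolding matrix_inv_def by auto

lemma inv_invertible: "invertible x \<Longrightarrow> invertible (matrix_inv x)"
  using inv_facts unfolding invertible_def by blast

lemma invertible_one: "invertible (mat 1 :: smat)"
  unfolding invertible_def by (intro exI[of _ "mat 1"]) simp

lemma inv_comm:
  assumes "invertible x" "x ** A = A ** x"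
  shows "matrix_inv x ** A = A ** matrix_inv x"
proof -
  have "matrix_inv x ** A = matrix_inv x ** A ** (x ** matrix_inv x)"
    using inv_facts[OF assms(1)] by simp
  also have "\<dots> = matrix_inv x ** (A ** x) ** matrix_inv x" by (simp add: matrix_mul_assoc)
  also have "\<dots> = matrix_inv x ** (x ** A) ** matrix_inv x" using assms(2) by simp
  also have "\<dots> = A ** matrix_inv x"
    using inv_facts[OF assms(1)] by (simp add: matrix_mul_assoc)
  finally show ?thesis .
qed

definition commset :: "smat set \<Rightarrow> smat set" where
  "commset S = {h. invertible h \<and> (\<forall>A\<in>S. h ** A = A ** h)}"

lemma matgroup_commset: "matgroup (commset S)"
  unfolding matgroup_def commset_def
proof (intro conjI ballI)
  show "mat 1 \<in> {h. invertible h \<and> (\<forall>A\<in>S. h ** A = A ** h)}"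
    using invertible_one by simp
next
  fix x y assume x: "x \<in> {h. invertible h \<and> (\<forall>A\<in>S. h ** A = A ** h)}"
    and y: "y \<in> {h. invertible h \<and> (\<forall>A\<in>S. h ** A = A ** h)}"
  have "x ** y ** A = A ** (x ** y)" if "A \<in> S" for A
  proof -
    have "x ** y ** A = x ** (A ** y)" using x y that by (simp add: matrix_mul_assoc[symmetric])
    also have "\<dots> = A ** (x ** y)" using x y that by (simp add: matrix_mul_assoc)
    finally show ?thesis .
  qed
  then show "x ** y \<in> {h. invertible h \<and> (\<forall>A\<in>S. h ** A = A ** h)}"
    using x y invertible_mult by blast
next
  fix x assume x: "x \<in> {h. invertible h \<and> (\<forall>A\<in>S. h ** A = A ** h)}"
  then show "invertible x" by simp
  show "matrix_inv x \<in> {h. invertible h \<and> (\<forall>A\<in>S. h ** A = A ** h)}"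
    using x inv_invertible inv_comm by blast
qed

lemma gen_group_least: "matgroup H \<Longrightarrow> A \<subseteq> H \<Longrightarrow> gen_group A \<subseteq> H"
  unfolding gen_group_def by blast

lemma gen_group_incl: "A \<subseteq> gen_group A"
  unfolding gen_group_def by blast

lemma spin8_comm:
  assumes rep: "clifford_rep \<Gamma>"
  shows "Spin8 \<Gamma> \<subseteq> commset {\<Gamma> 0, \<Gamma> 9}"
  unfolding Spin8_def
proof (rule gen_group_least[OF matgroup_commset], rule subsetI)
  fix h assume "h \<in> mexp ` spin8_lie \<Gamma>"
  then obtain X where X: "X \<in> spin8_lie \<Gamma>" "h = mexp X" by blast
  have "\<Gamma> 0 ** h = h ** \<Gamma> 0" "\<Gamma> 9 ** h = h ** \<Gamma> 9"
    unfolding X(2) by (intro mexp_comm lie_comm[OF rep X(1)]; simp)+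
  then show "h \<in> commset {\<Gamma> 0, \<Gamma> 9}"
    unfolding commset_def using mexp_invertible X(2) by auto
qed




lemma double_sum_mult:
  fixes A :: "'a \<Rightarrow> smat" and B :: "'b \<Rightarrow> smat"
  shows   "(\<Sum>M\<in>I. f M *\<^sub>R A M) ** (\<Sum>N\<in>J. g N *\<^sub>R B N) = (\<Sum>M\<in>I. \<Sum>N\<in>J. (f M * g N) *\<^sub>R (A M ** B N))"
  by (simp only: sum_mult_left, simp add: sum_mult_right mat_scaleR_left mat_scaleR_right scaleR_sum_right mult.commute)

lemma eta_sum: "M \<le> 10 \<Longrightarrow> (\<Sum>N\<le>10. f M * g N * (2 * eta M N)) = 2 * (eta M M * f M * g M)"
  unfolding eta_def by (simp add: if_distrib[of "\<lambda>x. _ * (2 * x)"] sum.delta cong: if_cong)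

lemma gvec_anti:
  assumes rep: "clifford_rep \<Gamma>"
  shows "Gvec \<Gamma> f ** Gvec \<Gamma> g + Gvec \<Gamma> g ** Gvec \<Gamma> f = (2 * minner f g) *\<^sub>R mat 1"
proof -
  have "Gvec \<Gamma> g ** Gvec \<Gamma> f = (\<Sum>M\<le>10. \<Sum>N\<le>10. (g M * f N) *\<^sub>R (\<Gamma> M ** \<Gamma> N))"
    unfolding Gvec_def by (rule double_sum_mult)
  also have "\<dots> = (\<Sum>M\<le>10. \<Sum>N\<le>10. (f M * g N) *\<^sub>R (\<Gamma> N ** \<Gamma> M))"
    by (subst sum.swap) (simp add: mult.commute)
  finally have 2: "Gvec \<Gamma> g ** Gvec \<Gamma> f = \<dots>" .
  have 1: "Gvec \<Gamma> f ** Gvec \<Gamma> g = (\<Sum>M\<le>10. \<Sum>N\<le>10. (f M * g N) *\<^sub>R (\<Gamma> M ** \<Gamma> N))"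
    unfolding Gvec_def by (rule double_sum_mult)
  have "Gvec \<Gamma> f ** Gvec \<Gamma> g + Gvec \<Gamma> g ** Gvec \<Gamma> f
      = (\<Sum>M\<le>10. \<Sum>N\<le>10. (f M * g N) *\<^sub>R (\<Gamma> M ** \<Gamma> N + \<Gamma> N ** \<Gamma> M))"
    unfolding 1 2 by (simp add: sum.distrib[symmetric] scaleR_right_distrib)
  also have "\<dots> = (\<Sum>M\<le>10. \<Sum>N\<le>10. (f M * g N * (2 * eta M N)) *\<^sub>R mat 1)"
    by (intro sum.cong refl) (simp add: cl_rel[OF rep])
  also have "\<dots> = (\<Sum>M\<le>10. \<Sum>N\<le>10. f M * g N * (2 * eta M N)) *\<^sub>R mat 1"
    by (simp add: scaleR_sum_left)
  also have "(\<Sum>M\<le>10. \<Sum>N\<le>10. f M * g N * (2 * eta M N)) = (\<Sum>M\<le>10. 2 * (eta M M * f M * g M))"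
    by (intro sum.cong refl) (simp add: eta_sum)
  also have "\<dots> = 2 * minner f g"
    unfolding minner_def by (simp add: sum_distrib_left)
  finally show ?thesis .
qed

lemma gvec_sq:
  assumes rep: "clifford_rep \<Gamma>"
  shows "Gvec \<Gamma> f ** Gvec \<Gamma> f = minner f f *\<^sub>R mat 1"
proof -
  have "(2::real) *\<^sub>R (Gvec \<Gamma> f ** Gvec \<Gamma> f) = (2::real) *\<^sub>R (minner f f *\<^sub>R mat 1)"
    using gvec_anti[OF rep, of f f] by (simp add: scaleR_2)
  then show ?thesis by (simp only: scaleR_cancel_left) simp
qed

lemma invariants_gen:
  assumes K: "matgroup K" and N: "matgroup N"
  shows "invariants (gen_group (K \<union> N)) = invariants K \<inter> invariants N"
proof (intro equalityI subsetI)
  fix e assume "e \<in> invariants (gen_group (K \<union> N))"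
  then show "e \<in> invariants K \<inter> invariants N"
    using gen_group_incl[of "K \<union> N"] unfolding invariants_def by blast
next
  fix e assume e: "e \<in> invariants K \<inter> invariants N"
  let ?H = "{h. invertible h \<and> h *v e = e}"
  have "matgroup ?H"
    unfolding matgroup_def
  proof (intro conjI ballI)
    show "mat 1 \<in> ?H" using invertible_one by simp
  next
    fix x y assume "x \<in> ?H" "y \<in> ?H"
    then show "x ** y \<in> ?H" using invertible_mult by (auto simp add: mv_assoc[symmetric])
  next
    fix x assume x: "x \<in> ?H"
    then show "invertible x" by simp
    have "(matrix_inv x ** x) *v e = e" using inv_facts[of x] x by simp
    then have "matrix_inv x *v e = e" using x by (simp add: mv_assoc[symmetric])
    then show "matrix_inv x \<in> ?H" using x inv_invertible by auto
  qed
  moreover have "K \<union> N \<subseteq> ?H"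
    using e K N unfolding invariants_def matgroup_def by auto
  ultimately have "gen_group (K \<union> N) \<subseteq> ?H" by (rule gen_group_least)
  then show "e \<in> invariants (gen_group (K \<union> N))" unfolding invariants_def by blast
qed




definition Vt :: "(nat \<Rightarrow> smat) \<Rightarrow> (nat \<Rightarrow> real) \<Rightarrow> smat" where
  "Vt \<Gamma> c = (\<Sum>\<mu>\<in>transverse. c \<mu> *\<^sub>R \<Gamma> \<mu>)"

lemma finite_transverse: "finite transverse"
  unfolding transverse_def by simp

lemma transverse_sub: "transverse \<subseteq> {..10}"
  unfolding transverse_def by auto

lemma null_sum: "(\<Sum>\<mu>\<in>transverse. c \<mu> *\<^sub>R Sigma_plus \<Gamma> \<mu>) = (-1/2) *\<^sub>R (Gplus \<Gamma> ** Vt \<Gamma> c)"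
  unfolding Vt_def Sigma_plus_def
  by (simp add: sum_mult_right mat_scaleR_right scaleR_sum_right)

lemma Vt_anti:
  assumes rep: "clifford_rep \<Gamma>"
  shows "Vt \<Gamma> c ** Gplus \<Gamma> = - (Gplus \<Gamma> ** Vt \<Gamma> c)"
proof -
  have "Vt \<Gamma> c ** Gplus \<Gamma> = (\<Sum>\<mu>\<in>transverse. c \<mu> *\<^sub>R (\<Gamma> \<mu> ** Gplus \<Gamma>))"
    unfolding Vt_def by (simp add: sum_mult_left mat_scaleR_left)
  also have "\<dots> = (\<Sum>\<mu>\<in>transverse. - (c \<mu> *\<^sub>R (Gplus \<Gamma> ** \<Gamma> \<mu>)))"
    by (intro sum.cong refl) (simp add: gp_anti[OF rep])
  also have "\<dots> = - (Gplus \<Gamma> ** Vt \<Gamma> c)"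
    unfolding Vt_def by (simp add: sum_mult_right mat_scaleR_right sum_negf)
  finally show ?thesis .
qed

lemma Vt_gvec: "Vt \<Gamma> c = Gvec \<Gamma> (\<lambda>M. if M \<in> transverse then c M else 0)"
proof -
  have "Gvec \<Gamma> (\<lambda>M. if M \<in> transverse then c M else 0)
      = (\<Sum>M\<in>{..10}. if M \<in> transverse then c M *\<^sub>R \<Gamma> M else 0)"
    unfolding Gvec_def by (intro sum.cong refl) simp
  also have "\<dots> = (\<Sum>M\<in>{..10} \<inter> transverse. c M *\<^sub>R \<Gamma> M)"
    by (rule sum.inter_restrict[symmetric]) simp
  also have "{..10} \<inter> transverse = transverse" using transverse_sub by blast
  finally show ?thesis unfolding Vt_def by simp
qed

lemma Vt_sq:
  assumes rep: "clifford_rep \<Gamma>"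
  shows "Vt \<Gamma> c ** Vt \<Gamma> c = (\<Sum>\<mu>\<in>transverse. c \<mu> * c \<mu>) *\<^sub>R mat 1"
proof -
  let ?c = "\<lambda>M. if M \<in> transverse then c M else 0"
  have "minner ?c ?c = (\<Sum>M\<in>{..10}. if M \<in> transverse then c M * c M else 0)"
    unfolding minner_def by (intro sum.cong refl) (auto simp: eta_def transverse_def)
  also have "\<dots> = (\<Sum>M\<in>{..10} \<inter> transverse. c M * c M)"
    by (rule sum.inter_restrict[symmetric]) simp
  also have "{..10} \<inter> transverse = transverse" using transverse_sub by blast
  finally show ?thesis unfolding Vt_gvec gvec_sq[OF rep] by simp
qed

lemma mv_neg_left: "(- A) *v x = - (A *v x)" for A :: smat
  by (simp add: matrix_vector_mult_def vec_eq_iff sum_negf)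

lemma null_rot_fix:
  assumes rep: "clifford_rep \<Gamma>" and n: "n \<in> null_rot \<Gamma>" and e: "Gplus \<Gamma> *v e = 0"
  shows "n *v e = e"
proof -
  obtain c where c: "n = mat 1 + (\<Sum>\<mu>\<in>transverse. c \<mu> *\<^sub>R Sigma_plus \<Gamma> \<mu>)"
    using n unfolding null_rot_def by blast
  have "(Gplus \<Gamma> ** Vt \<Gamma> c) *v e = - ((Vt \<Gamma> c ** Gplus \<Gamma>) *v e)"
    using Vt_anti[OF rep, of c] by (simp add: mv_neg_left)
  also have "\<dots> = 0" using e by (simp add: mv_assoc[symmetric])
  finally have "(Gplus \<Gamma> ** Vt \<Gamma> c) *v e = 0" .
  then show ?thesis
    unfolding c null_sum by (simp add: matrix_vector_mult_add_rdistrib matrix_vector_mult_diff_rdistrib mv_scaleR_left)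
qed

lemma null_rot_kill:
  assumes rep: "clifford_rep \<Gamma>" and n: "n \<in> null_rot \<Gamma>" "n \<noteq> mat 1" and e: "n *v e = e"
  shows "Gplus \<Gamma> *v e = 0"
proof -
  obtain c where c: "n = mat 1 + (\<Sum>\<mu>\<in>transverse. c \<mu> *\<^sub>R Sigma_plus \<Gamma> \<mu>)"
    using n unfolding null_rot_def by blast
  let ?V = "Vt \<Gamma> c" and ?P = "Gplus \<Gamma>"
  have "\<exists>\<mu>\<in>transverse. c \<mu> \<noteq> 0"
  proof (rule ccontr)
    assume "\<not> ?thesis"
    then have "n = mat 1" unfolding c by simp
    then show False using n(2) by simp
  qed
  then obtain \<mu> where mu: "\<mu> \<in> transverse" "c \<mu> \<noteq> 0" by blast
  let ?s = "\<Sum>\<mu>\<in>transverse. c \<mu> * c \<mu>"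
  have "c \<mu> * c \<mu> \<le> ?s"
    by (rule member_le_sum[OF mu(1)]) (auto simp: finite_transverse)
  moreover have "c \<mu> * c \<mu> > 0" using mu(2) by (cases "c \<mu> > 0") (auto simp: mult_neg_neg)
  ultimately have s0: "?s \<noteq> 0" by linarith
  have "((-1/2) *\<^sub>R (?P ** ?V)) *v e = 0"
    using e unfolding c null_sum by (simp add: matrix_vector_mult_add_rdistrib matrix_vector_mult_diff_rdistrib mv_scaleR_left mv_neg_left)
  then have 1: "?P *v (?V *v e) = 0" by (simp add: mv_scaleR_left mv_neg_left mv_assoc)
  have "?V *v (?P *v e) = - (?P *v (?V *v e))"
    using Vt_anti[OF rep, of c] by (simp add: mv_assoc mv_neg_left)
  then have "?V *v (?P *v e) = 0" using 1 by simp
  then have "?V *v (?V *v (?P *v e)) = 0" by simp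
  moreover have "?V *v (?V *v (?P *v e)) = ?s *\<^sub>R (?P *v e)"
    by (subst mv_assoc[of ?V ?V]) (simp only: Vt_sq[OF rep] mv_scaleR_left matrix_vector_mul_lid)
  ultimately have "?s *\<^sub>R (?P *v e) = 0" by simp
  then show ?thesis using s0 by simp
qed

lemma null_inv:
  assumes rep: "clifford_rep \<Gamma>" and N: "N \<subseteq> null_rot \<Gamma>" "\<exists>n\<in>N. n \<noteq> mat 1"
  shows "invariants N = mker (Gplus \<Gamma>)"
  using null_rot_fix[OF rep] null_rot_kill[OF rep] N
  unfolding invariants_def mker_def by blast




lemma foldr_comm:
  fixes u :: smat and W :: "nat \<Rightarrow> smat"
  assumes "\<And>j. j \<in> set xs \<Longrightarrow> u ** W j = s j *\<^sub>R (W j ** u)"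
  shows "u ** foldr (\<lambda>j A. W j ** A) xs (mat 1) = (\<Prod>j\<leftarrow>xs. s j) *\<^sub>R (foldr (\<lambda>j A. W j ** A) xs (mat 1) ** u)"
  using assms
proof (induction xs)
  case Nil then show ?case by simp
next
  case (Cons j xs)
  let ?R = "foldr (\<lambda>j A. W j ** A) xs (mat 1)"
  have "u ** (W j ** ?R) = (u ** W j) ** ?R" by (simp add: matrix_mul_assoc)
  also have "\<dots> = s j *\<^sub>R (W j ** (u ** ?R))"
    using Cons.prems[of j] by (simp add: mat_scaleR_left matrix_mul_assoc)
  also have "\<dots> = (s j * (\<Prod>j\<leftarrow>xs. s j)) *\<^sub>R (W j ** ?R ** u)"
    using Cons by (simp add: mat_scaleR_right matrix_mul_assoc)
  finally show ?case by simp
qed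

lemma prod_sign: "i < 6 \<Longrightarrow> (\<Prod>j\<leftarrow>[0..<6]. (if j = i then 1 else -1::real)) = -1"
  by (simp add: upt_rec less_Suc_eq numeral_eq_Suc) (elim disjE; simp)

lemma W_anti:
  assumes rep: "clifford_rep \<Gamma>" and w: "unit_simple_51_e09 w" and i: "i < 6"
  shows "Gvec \<Gamma> (w i) ** multivec_action \<Gamma> w = - (multivec_action \<Gamma> w ** Gvec \<Gamma> (w i))"
proof -
  have h: "Gvec \<Gamma> (w i) ** Gvec \<Gamma> (w j) = (if j = i then 1 else -1) *\<^sub>R (Gvec \<Gamma> (w j) ** Gvec \<Gamma> (w i))"
    if "j \<in> set [0..<6]" for j
  proof (cases "j = i")
    case True then show ?thesis by simp
  next
    case False
    have "minner (w i) (w j) = 0" using w that i False unfolding unit_simple_51_e09_def by auto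
    then have "Gvec \<Gamma> (w i) ** Gvec \<Gamma> (w j) + Gvec \<Gamma> (w j) ** Gvec \<Gamma> (w i) = 0"
      using gvec_anti[OF rep, of "w i" "w j"] by simp
    then show ?thesis using False by (simp add: eq_neg_iff_add_eq_0)
  qed
  have "Gvec \<Gamma> (w i) ** foldr (\<lambda>j A. Gvec \<Gamma> (w j) ** A) [0..<6] (mat 1)
     = (\<Prod>j\<leftarrow>[0..<6]. (if j = i then 1 else -1::real)) *\<^sub>R (foldr (\<lambda>j A. Gvec \<Gamma> (w j) ** A) [0..<6] (mat 1) ** Gvec \<Gamma> (w i))"
    by (rule foldr_comm[where W="\<lambda>j. Gvec \<Gamma> (w j)" and s="\<lambda>j. if j = i then 1 else -1"]) (rule h)
  then show ?thesis unfolding multivec_action_def prod_sign[OF i] by simp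
qed

lemma basis_in_span_anti:
  assumes rep: "clifford_rep \<Gamma>" and w: "unit_simple_51_e09 w"
    and a: "\<forall>M\<le>10. basis_vec k M = (\<Sum>i<6. a i * w i M)" and k: "k \<le> 10"
  shows "\<Gamma> k ** multivec_action \<Gamma> w = - (multivec_action \<Gamma> w ** \<Gamma> k)"
proof -
  let ?P = "multivec_action \<Gamma> w"
  have "\<Gamma> k = Gvec \<Gamma> (basis_vec k)"
    unfolding Gvec_def basis_vec_def using k by (simp add: if_distrib[of "\<lambda>x. x *\<^sub>R _"] sum.delta cong: if_cong)
  also have "\<dots> = (\<Sum>M\<le>10. (\<Sum>i<6. a i * w i M) *\<^sub>R \<Gamma> M)"
    unfolding Gvec_def using a by (intro sum.cong refl) simp
  also have "\<dots> = (\<Sum>i<6. a i *\<^sub>R Gvec \<Gamma> (w i))"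
    unfolding Gvec_def scaleR_sum_left scaleR_sum_right
    by (subst sum.swap) simp
  finally have gk: "\<Gamma> k = (\<Sum>i<6. a i *\<^sub>R Gvec \<Gamma> (w i))" .
  have "\<Gamma> k ** ?P = (\<Sum>i<6. a i *\<^sub>R (Gvec \<Gamma> (w i) ** ?P))"
    unfolding gk by (simp add: sum_mult_left mat_scaleR_left)
  also have "\<dots> = (\<Sum>i<6. - (a i *\<^sub>R (?P ** Gvec \<Gamma> (w i))))"
    by (intro sum.cong refl) (simp add: W_anti[OF rep w])
  also have "\<dots> = - (?P ** \<Gamma> k)"
    unfolding gk by (simp add: sum_mult_right mat_scaleR_right sum_negf)
  finally show ?thesis .
qed

lemma P_anti_gpm:
  assumes rep: "clifford_rep \<Gamma>" and w: "unit_simple_51_e09 w"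
  shows "Gplus \<Gamma> ** multivec_action \<Gamma> w = - (multivec_action \<Gamma> w ** Gplus \<Gamma>)"
    "Gminus \<Gamma> ** multivec_action \<Gamma> w = - (multivec_action \<Gamma> w ** Gminus \<Gamma>)"
proof -
  obtain a0 where a0: "\<forall>M\<le>10. basis_vec 0 M = (\<Sum>i<6. a0 i * w i M)"
    using w unfolding unit_simple_51_e09_def by blast
  obtain a9 where a9: "\<forall>M\<le>10. basis_vec 9 M = (\<Sum>i<6. a9 i * w i M)"
    using w unfolding unit_simple_51_e09_def by blast
  note h0 = basis_in_span_anti[OF rep w a0] and h9 = basis_in_span_anti[OF rep w a9]
  show "Gplus \<Gamma> ** multivec_action \<Gamma> w = - (multivec_action \<Gamma> w ** Gplus \<Gamma>)"
    unfolding Gplus_def using h0 h9 by (simp add: matrix_add_rdistrib' matrix_add_ldistrib)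
  show "Gminus \<Gamma> ** multivec_action \<Gamma> w = - (multivec_action \<Gamma> w ** Gminus \<Gamma>)"
    unfolding Gminus_def using h0 h9 by (simp add: matrix_diff_rdistrib matrix_diff_ldistrib)
qed




lemma mv_neg_right: "A *v (- x) = - (A *v x)" for A :: smat
  by (simp add: matrix_vector_mult_def vec_eq_iff sum_negf)

lemma part_iii:
  fixes P Q R :: smat and K :: "smat set" and s :: real
  assumes PP: "P ** P = 0" and QQ: "Q ** Q = 0"
    and PQ: "P ** Q + Q ** P = (-4) *\<^sub>R mat 1"
    and comm: "\<And>h. h \<in> K \<Longrightarrow> h ** P = P ** h \<and> h ** Q = Q ** h"
    and RP: "P ** R = - (R ** P)" and RQ: "Q ** R = - (R ** Q)"
  shows "bij_betw (\<lambda>\<epsilon>. P *v \<epsilon>) ((invariants K \<inter> mker Q) \<inter> eig R s) ((invariants K \<inter> mker P) \<inter> eig R (-s))"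
proof -
  have bij: "bij_betw (\<lambda>\<epsilon>. P *v \<epsilon>) (invariants K \<inter> mker Q) (invariants K \<inter> mker P)"
    using part_i[OF PP QQ PQ comm] by blast
  have QPv: "Q *v (P *v x) = (-4) *\<^sub>R x - P *v (Q *v x)" for x
  proof -
    have "P *v (Q *v x) + Q *v (P *v x) = (P ** Q + Q ** P) *v x"
      by (simp add: mv_assoc matrix_vector_mult_add_rdistrib)
    also have "\<dots> = ((-4) *\<^sub>R mat 1) *v x" using PQ by simp
    also have "\<dots> = (-4) *\<^sub>R x" by (simp only: mv_scaleR_left matrix_vector_mul_lid)
    finally show ?thesis by (simp add: algebra_simps)
  qed
  have RPv: "R *v (P *v x) = - (P *v (R *v x))" for x
    using RP by (simp add: mv_assoc mv_neg_left)
  have RQv: "R *v (Q *v x) = - (Q *v (R *v x))" for x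
    using RQ by (simp add: mv_assoc mv_neg_left)
  show ?thesis
  proof (rule bij_betw_imageI)
    show "inj_on (\<lambda>\<epsilon>. P *v \<epsilon>) ((invariants K \<inter> mker Q) \<inter> eig R s)"
      using bij unfolding bij_betw_def by (meson inf_le1 inj_on_subset)
    show "(\<lambda>\<epsilon>. P *v \<epsilon>) ` ((invariants K \<inter> mker Q) \<inter> eig R s) = (invariants K \<inter> mker P) \<inter> eig R (-s)"
    proof (intro equalityI subsetI)
      fix y assume "y \<in> (\<lambda>\<epsilon>. P *v \<epsilon>) ` ((invariants K \<inter> mker Q) \<inter> eig R s)"
      then obtain x where x: "x \<in> invariants K \<inter> mker Q" "R *v x = s *\<^sub>R x" "y = P *v x"
        unfolding eig_def by auto
      have "y \<in> invariants K \<inter> mker P" using bij x unfolding bij_betw_def by blast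
      moreover have "R *v y = (-s) *\<^sub>R y"
        using x RPv by (simp add: matrix_vector_mult_scaleR)
      ultimately show "y \<in> (invariants K \<inter> mker P) \<inter> eig R (-s)" unfolding eig_def by simp
    next
      fix y assume y: "y \<in> (invariants K \<inter> mker P) \<inter> eig R (-s)"
      then obtain x where x: "x \<in> invariants K \<inter> mker Q" "y = P *v x"
        using bij unfolding bij_betw_def by blast
      have "Q *v x = 0" using x unfolding mker_def by simp
      then have "Q *v y = (-4) *\<^sub>R x" using x QPv by simp
      then have xe: "x = (-1/4) *\<^sub>R (Q *v y)" by simp
      have "R *v y = (-s) *\<^sub>R y" using y unfolding eig_def by simp
      then have "R *v x = s *\<^sub>R x"
        unfolding xe using RQv[of y] by (simp add: matrix_vector_mult_scaleR mv_neg_right)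
      then show "y \<in> (\<lambda>\<epsilon>. P *v \<epsilon>) ` ((invariants K \<inter> mker Q) \<inter> eig R s)"
        using x unfolding eig_def by blast
    qed
  qed
qed

theorem mainTheorem7:
  fixes \<Gamma> :: "nat \<Rightarrow> real^32^32" and K N :: "(real^32^32) set"
  assumes rep: "clifford_rep \<Gamma>"
    and K: "matgroup K" "K \<subseteq> Spin8 \<Gamma>"
    and N: "matgroup N" "N \<subseteq> null_rot \<Gamma>" "\<exists>n\<in>N. n \<noteq> mat 1"
  defines "G \<equiv> gen_group (K \<union> N)"
    and "DKp \<equiv> invariants K \<inter> mker (Gplus \<Gamma>)"
    and "DKm \<equiv> invariants K \<inter> mker (Gminus \<Gamma>)"
  shows
    "(direct_sum (invariants K) DKp DKm
     \<and> bij_betw (\<lambda>\<epsilon>. Gplus \<Gamma> *v \<epsilon>) DKm DKp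
     \<and> bij_betw (\<lambda>\<epsilon>. Gminus \<Gamma> *v \<epsilon>) DKp DKm
     \<and> 2 * dim DKp = dim (invariants K) \<and> 2 * dim DKm = dim (invariants K)
     \<and> even (dim (invariants K)))
     \<and> (invariants G = DKp \<and> 2 * dim (invariants G) = dim (invariants K))
     \<and> (\<forall>w. unit_simple_51_e09 w \<longrightarrow>
       bij_betw (\<lambda>\<epsilon>. Gplus \<Gamma> *v \<epsilon>) (DKm \<inter> eig (multivec_action \<Gamma> w) 1)
                                    (DKp \<inter> eig (multivec_action \<Gamma> w) (-1))
     \<and> bij_betw (\<lambda>\<epsilon>. Gplus \<Gamma> *v \<epsilon>) (DKm \<inter> eig (multivec_action \<Gamma> w) (-1))
                                    (DKp \<inter> eig (multivec_action \<Gamma> w) 1)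
     \<and> 2 * dim (eig (multivec_action \<Gamma> w) 1 \<inter> invariants G) \<le> dim (invariants K))"
proof -
  have comm: "h ** Gplus \<Gamma> = Gplus \<Gamma> ** h \<and> h ** Gminus \<Gamma> = Gminus \<Gamma> ** h" if "h \<in> K" for h
  proof -
    have "h \<in> commset {\<Gamma> 0, \<Gamma> 9}" using that K(2) spin8_comm[OF rep] by blast
    then have "h ** \<Gamma> 0 = \<Gamma> 0 ** h" "h ** \<Gamma> 9 = \<Gamma> 9 ** h" unfolding commset_def by auto
    then show ?thesis
      by (simp add: Gplus_def Gminus_def matrix_add_ldistrib matrix_add_rdistrib'
          matrix_diff_ldistrib matrix_diff_rdistrib)
  qed
  note pi = part_i[of "Gplus \<Gamma>" "Gminus \<Gamma>" K, OF gp_sq[OF rep] gm_sq[OF rep] gpm[OF rep] comm, folded DKp_def DKm_def]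
  have iG: "invariants G = DKp"
    unfolding G_def invariants_gen[OF K(1) N(1)] null_inv[OF rep N(2,3)] DKp_def ..
  have p1: "direct_sum (invariants K) DKp DKm
     \<and> bij_betw (\<lambda>\<epsilon>. Gplus \<Gamma> *v \<epsilon>) DKm DKp
     \<and> bij_betw (\<lambda>\<epsilon>. Gminus \<Gamma> *v \<epsilon>) DKp DKm
     \<and> 2 * dim DKp = dim (invariants K) \<and> 2 * dim DKm = dim (invariants K)
     \<and> even (dim (invariants K))"
    using pi by (metis dvd_triv_left)
  have p2: "invariants G = DKp \<and> 2 * dim (invariants G) = dim (invariants K)"
    using iG pi by simp
  have p3: "bij_betw (\<lambda>\<epsilon>. Gplus \<Gamma> *v \<epsilon>) (DKm \<inter> eig (multivec_action \<Gamma> w) 1)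
                                    (DKp \<inter> eig (multivec_action \<Gamma> w) (-1))
     \<and> bij_betw (\<lambda>\<epsilon>. Gplus \<Gamma> *v \<epsilon>) (DKm \<inter> eig (multivec_action \<Gamma> w) (-1))
                                    (DKp \<inter> eig (multivec_action \<Gamma> w) 1)
     \<and> 2 * dim (eig (multivec_action \<Gamma> w) 1 \<inter> invariants G) \<le> dim (invariants K)"
    if w: "unit_simple_51_e09 w" for w
  proof -
    note pa = P_anti_gpm[OF rep w]
    note b = part_iii[of "Gplus \<Gamma>" "Gminus \<Gamma>" K "multivec_action \<Gamma> w", OF gp_sq[OF rep] gm_sq[OF rep] gpm[OF rep] comm pa, folded DKp_def DKm_def]
    have "dim (eig (multivec_action \<Gamma> w) 1 \<inter> invariants G) \<le> dim DKp"
      unfolding iG by (rule dim_subset) blast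
    then have "2 * dim (eig (multivec_action \<Gamma> w) 1 \<inter> invariants G) \<le> dim (invariants K)"
      using pi by linarith
    then show ?thesis using b[of 1] b[of "-1"] by simp
  qed
  show ?thesis using p1 p2 p3 by blast
qed


end
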